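(* Let $G'$ be a graph with a spanning tree $T'$; colour the edges of $T'$ green and all other edges of $G'$ black. Suppose $G$ with green edge set $E(T)$ is obtained from $G'$ with this colouring by a Tutte-extension or a diamond-extension. Then $T$ is a spanning tree of $G$, and $G-E(T)$ can be decomposed into a (possibly empty) 2-regular graph and a (possibly empty) matching if and only if $G'-E(T')$ can.
   Context: All graphs are finite and simple. Tutte-extension: choose two distinct green edges $x_uy_u$ and $x_vy_v$ (possibly sharing an end); subdivide the first by a new vertex $u$ and the second by a new vertex $v$, the four resulting edges being green, and add a new black edge $uv$. Diamond-extension: choose a green edge $xy$, delete it, add new vertices $d_1,d_2,d_3,d_4$ with green edges $xd_1,d_1d_3,d_3d_2,d_2d_4,d_4y$ and black edges $d_1d_2,d_3d_4$. A decomposition of a graph is a partition of its edge set into the edge sets of the listed subgraphs. *)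

theory Defs
  imports Main
begin

definition simple_graph :: "'a set \<Rightarrow> 'a set set \<Rightarrow> bool" where
  "simple_graph V E \<longleftrightarrow> finite V \<and> (\<forall>e\<in>E. e \<subseteq> V \<and> card e = 2)"

definition reach :: "'a set set \<Rightarrow> 'a \<Rightarrow> 'a \<Rightarrow> bool" where
  "reach F = (\<lambda>a b. {a, b} \<in> F)\<^sup>*\<^sup>*"

definition connected_on :: "'a set \<Rightarrow> 'a set set \<Rightarrow> bool" where
  "connected_on V F \<longleftrightarrow> (\<forall>x\<in>V. \<forall>y\<in>V. reach F x y)"

definition is_cycle :: "'a set set \<Rightarrow> 'a list \<Rightarrow> bool" where
  "is_cycle F vs \<longleftrightarrow> length vs \<ge> 3 \<and> distinct vs \<and>
     (\<forall>i<length vs. {vs ! i, vs ! ((i + 1) mod length vs)} \<in> F)"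

definition acyclic_edges :: "'a set set \<Rightarrow> bool" where
  "acyclic_edges F \<longleftrightarrow> \<not> (\<exists>vs. is_cycle F vs)"

definition spanning_tree :: "'a set \<Rightarrow> 'a set set \<Rightarrow> 'a set set \<Rightarrow> bool" where
  "spanning_tree V E T \<longleftrightarrow> T \<subseteq> E \<and> connected_on V T \<and> acyclic_edges T"

definition tutte_ext :: "'a set \<Rightarrow> 'a set set \<Rightarrow> 'a set set \<Rightarrow> 'a set \<Rightarrow> 'a set set \<Rightarrow> 'a set set \<Rightarrow> bool" where
  "tutte_ext V' E' T' V E T \<longleftrightarrow>
    (\<exists>xu yu xv yv u v.
       {xu, yu} \<in> T' \<and> {xv, yv} \<in> T' \<and> {xu, yu} \<noteq> {xv, yv} \<and>
       u \<notin> V' \<and> v \<notin> V' \<and> u \<noteq> v \<and>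
       V = V' \<union> {u, v} \<and>
       T = (T' - {{xu, yu}, {xv, yv}}) \<union> {{xu, u}, {u, yu}, {xv, v}, {v, yv}} \<and>
       E = (E' - {{xu, yu}, {xv, yv}}) \<union> {{xu, u}, {u, yu}, {xv, v}, {v, yv}} \<union> {{u, v}})"

definition diamond_ext :: "'a set \<Rightarrow> 'a set set \<Rightarrow> 'a set set \<Rightarrow> 'a set \<Rightarrow> 'a set set \<Rightarrow> 'a set set \<Rightarrow> bool" where
  "diamond_ext V' E' T' V E T \<longleftrightarrow>
    (\<exists>x y d1 d2 d3 d4.
       {x, y} \<in> T' \<and>
       d1 \<notin> V' \<and> d2 \<notin> V' \<and> d3 \<notin> V' \<and> d4 \<notin> V' \<and> distinct [d1, d2, d3, d4] \<and>
       V = V' \<union> {d1, d2, d3, d4} \<and>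
       T = (T' - {{x, y}}) \<union> {{x, d1}, {d1, d3}, {d3, d2}, {d2, d4}, {d4, y}} \<and>
       E = (E' - {{x, y}}) \<union> {{x, d1}, {d1, d3}, {d3, d2}, {d2, d4}, {d4, y}} \<union> {{d1, d2}, {d3, d4}})"

definition two_regular_edges :: "'a set set \<Rightarrow> bool" where
  "two_regular_edges A \<longleftrightarrow> (\<forall>w. (\<exists>e\<in>A. w \<in> e) \<longrightarrow> card {e\<in>A. w \<in> e} = 2)"

definition matching_edges :: "'a set set \<Rightarrow> bool" where
  "matching_edges B \<longleftrightarrow> (\<forall>e\<in>B. \<forall>f\<in>B. e \<noteq> f \<longrightarrow> e \<inter> f = {})"

definition decomp_2reg_matching :: "'a set set \<Rightarrow> bool" where
  "decomp_2reg_matching F \<longleftrightarrow>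
    (\<exists>A B. A \<union> B = F \<and> A \<inter> B = {} \<and> two_regular_edges A \<and> matching_edges B)"

end

theory Submission
  imports Defs
begin

definition subdiv :: "'a set set \<Rightarrow> 'a \<Rightarrow> 'a \<Rightarrow> 'a \<Rightarrow> 'a set set" where
  "subdiv F a b w = (F - {{a,b}}) \<union> {{a,w},{w,b}}"

lemma reach_step_subdiv:
  assumes "{p,q} \<in> F"
  shows "reach (subdiv F a b w) p q"
proof (cases "{p,q} = {a,b}")
  case False
  then have "{p,q} \<in> subdiv F a b w" using assms by (auto simp: subdiv_def)
  then show ?thesis unfolding reach_def by auto
next
  case True
  have e1: "{a,w} \<in> subdiv F a b w" "{w,b} \<in> subdiv F a b w" by (auto simp: subdiv_def)
  have e2: "{w,a} \<in> subdiv F a b w" "{b,w} \<in> subdiv F a b w"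
    using e1 by (auto simp: insert_commute)
  from True have "(p = a \<and> q = b) \<or> (p = b \<and> q = a)" by (auto simp: doubleton_eq_iff)
  then show ?thesis
  proof
    assume "p = a \<and> q = b"
    then show ?thesis using e1 unfolding reach_def
      by (meson converse_rtranclp_into_rtranclp r_into_rtranclp)
  next
    assume "p = b \<and> q = a"
    then show ?thesis using e2 unfolding reach_def
      by (meson converse_rtranclp_into_rtranclp r_into_rtranclp)
  qed
qed

lemma reach_subdiv:
  assumes "reach F x y"
  shows "reach (subdiv F a b w) x y"
  using assms unfolding reach_def
proof (induction rule: rtranclp_induct)
  case base
  then show ?case by simp
next
  case (step y z)
  then show ?case using reach_step_subdiv[of y z F a b w] unfolding reach_def
    by (meson rtranclp_trans)
qed

lemma reach_sym:
  assumes "reach F x y"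
  shows "reach F y x"
  using assms unfolding reach_def
proof (induction rule: rtranclp_induct)
  case base
  then show ?case by simp
next
  case (step y z)
  then have "{z,y} \<in> F" by (simp add: insert_commute)
  then show ?case using step
    by (meson converse_rtranclp_into_rtranclp)
qed

lemma reach_trans: "reach F x y \<Longrightarrow> reach F y z \<Longrightarrow> reach F x z"
  unfolding reach_def by (meson rtranclp_trans)

lemma conn_subdiv:
  assumes "connected_on V F" "{a,b} \<in> F" "a \<in> V"
  shows "connected_on (insert w V) (subdiv F a b w)"
proof -
  have aw: "reach (subdiv F a b w) a w"
    unfolding reach_def by (rule r_into_rtranclp) (auto simp: subdiv_def)
  have wa: "reach (subdiv F a b w) w a" using aw reach_sym by metis
  have R: "reach (subdiv F a b w) x y" if "x \<in> V" "y \<in> V" for x y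
    using assms(1) that reach_subdiv unfolding connected_on_def by metis
  show ?thesis unfolding connected_on_def
  proof (intro ballI)
    fix x y assume x: "x \<in> insert w V" and y: "y \<in> insert w V"
    show "reach (subdiv F a b w) x y"
    proof (cases "x = w")
      case True
      show ?thesis
      proof (cases "y = w")
        case True then show ?thesis using \<open>x = w\<close> unfolding reach_def by simp
      next
        case False then have "y \<in> V" using y by simp
        then show ?thesis using True wa R[OF assms(3)] reach_trans by metis
      qed
    next
      case False then have xV: "x \<in> V" using x by simp
      show ?thesis
      proof (cases "y = w")
        case True then show ?thesis using xV aw R[OF xV assms(3)] reach_trans by metis
      next
        case False then have "y \<in> V" using y by simp
        then show ?thesis using xV R by metis
      qed
    qed
  qed
qed

lemma is_cycle_rotate:
  assumes "is_cycle F vs"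
  shows "is_cycle F (rotate m vs)"
proof -
  let ?L = "length vs"
  have L: "?L \<ge> 3" "distinct vs" and E: "\<And>i. i < ?L \<Longrightarrow> {vs ! i, vs ! ((i + 1) mod ?L)} \<in> F"
    using assms unfolding is_cycle_def by auto
  have "{rotate m vs ! i, rotate m vs ! ((i + 1) mod ?L)} \<in> F" if "i < ?L" for i
  proof -
    have pos: "?L > 0" using L by (auto simp: length_rotate)
    have "rotate m vs ! i = vs ! ((m + i) mod ?L)" using that by (simp add: nth_rotate)
    moreover have "rotate m vs ! ((i + 1) mod ?L) = vs ! ((m + (i+1) mod ?L) mod ?L)"
      using pos by (simp add: nth_rotate)
    moreover have "(m + (i+1) mod ?L) mod ?L = ((m + i) mod ?L + 1) mod ?L"
      by (simp add: mod_add_right_eq mod_Suc_eq)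
    ultimately show ?thesis using E[of "(m + i) mod ?L"] pos by simp
  qed
  then show ?thesis using L unfolding is_cycle_def by simp
qed

lemma acyclic_subdiv:
  assumes "acyclic_edges F" "{a,b} \<in> F" "\<forall>e\<in>F. w \<notin> e"
  shows "acyclic_edges (subdiv F a b w)"
proof (rule ccontr)
  let ?F = "subdiv F a b w"
  assume "\<not> acyclic_edges ?F"
  then obtain vs where cyc: "is_cycle ?F vs" unfolding acyclic_edges_def by auto
  have wa: "w \<noteq> a" "w \<noteq> b" using assms(2,3) by auto
  have sub: "e \<in> F" if "e \<in> ?F" "w \<notin> e" for e
    using that by (auto simp: subdiv_def)
  show False
  proof (cases "w \<in> set vs")
    case False
    have "is_cycle F vs"
      unfolding is_cycle_def
    proof (intro conjI allI impI)
      show "3 \<le> length vs" "distinct vs" using cyc unfolding is_cycle_def by auto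
      fix i assume i: "i < length vs"
      have "(i + 1) mod length vs < length vs" using i by (metis mod_less_divisor not_less0 neq0_conv)
      then have "vs ! ((i + 1) mod length vs) \<noteq> w" "vs ! i \<noteq> w"
        using False i nth_mem by metis+
      moreover have "{vs ! i, vs ! ((i + 1) mod length vs)} \<in> ?F"
        using cyc i unfolding is_cycle_def by auto
      ultimately show "{vs ! i, vs ! ((i + 1) mod length vs)} \<in> F" using sub by blast
    qed
    then show False using assms(1) unfolding acyclic_edges_def by auto
  next
    case True
    then obtain j where j: "j < length vs" "vs ! j = w" by (auto simp: in_set_conv_nth)
    define ws where "ws = rotate j vs"
    have cw: "is_cycle ?F ws" unfolding ws_def by (rule is_cycle_rotate[OF cyc])
    let ?L = "length ws"
    have L: "?L \<ge> 3" "distinct ws" and E: "\<And>i. i < ?L \<Longrightarrow> {ws ! i, ws ! ((i + 1) mod ?L)} \<in> ?F"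
      using cw unfolding is_cycle_def by auto
    have ne: "ws \<noteq> []" "?L > 0" using L by auto
    have w0: "ws ! 0 = w" using j nth_rotate[of 0 vs j] unfolding ws_def by force
    have nw: "ws ! i \<noteq> w" if "0 < i" "i < ?L" for i
      using L(2) w0 that by (metis nth_eq_iff_index_eq less_trans gr_implies_not0)
    have e0: "{w, ws ! 1} \<in> ?F" using E[of 0] L w0 ne by simp
    have eL: "{ws ! (?L - 1), w} \<in> ?F" using E[of "?L - 1"] L w0 ne by simp
    have n1: "ws ! 1 \<in> {a,b}" using e0 nw[of 1] L wa assms(3) by (auto simp: subdiv_def doubleton_eq_iff)
    have nL: "ws ! (?L - 1) \<in> {a,b}" using eL nw[of "?L - 1"] L wa assms(3)
      by (auto simp: subdiv_def doubleton_eq_iff)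
    have d1L: "ws ! 1 \<noteq> ws ! (?L - 1)" using L by (simp add: nth_eq_iff_index_eq)
    have ab: "{ws ! (?L - 1), ws ! 1} = {a,b}" using n1 nL d1L by auto
    have mid: "{ws ! i, ws ! (i+1)} \<in> F" if "0 < i" "i + 1 < ?L" for i
    proof -
      have "{ws ! i, ws ! ((i + 1) mod ?L)} \<in> ?F" using E[of i] that by simp
      then have "{ws ! i, ws ! (i + 1)} \<in> ?F" using that by simp
      moreover have "w \<notin> {ws ! i, ws ! (i + 1)}" using nw[of i] nw[of "i+1"] that by auto
      ultimately show ?thesis using sub by blast
    qed
    show False
    proof (cases "?L = 3")
      case True
      have "{ws ! 1, ws ! 2} \<in> ?F" using E[of 1] True by (simp add: numeral_2_eq_2)
      moreover have "{ws ! 1, ws ! 2} = {a,b}" using ab True by (auto simp: insert_commute)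
      ultimately show False using wa by (auto simp: subdiv_def doubleton_eq_iff)
    next
      case False
      define rs where "rs = tl ws"
      have lr: "length rs = ?L - 1" unfolding rs_def by simp
      have rn: "rs ! i = ws ! (i+1)" if "i < length rs" for i
        using that unfolding rs_def by (simp add: nth_tl)
      have "is_cycle F rs"
        unfolding is_cycle_def
      proof (intro conjI allI impI)
        show "3 \<le> length rs" using lr L False by simp
        show "distinct rs" unfolding rs_def using L by (simp add: distinct_tl)
        fix i assume i: "i < length rs"
        show "{rs ! i, rs ! ((i + 1) mod length rs)} \<in> F"
        proof (cases "i + 1 < length rs")
          case True
          then show ?thesis using rn[of i] rn[of "i+1"] mid[of "i+1"] lr by simp
        next
          case False
          then have "i = length rs - 1" using i by simp
          then have i1: "i + 1 = length rs" "i + 1 = ?L - 1" using i lr by auto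
          then have m0: "(i + 1) mod length rs = 0" by simp
          have "rs ! i = ws ! (?L - 1)" using rn[OF i] i1 by simp
          moreover have "rs ! ((i + 1) mod length rs) = ws ! 1" using m0 rn[of 0] i by force
          ultimately have "rs ! i = ws ! (?L - 1)" "rs ! ((i + 1) mod length rs) = ws ! 1"
            by auto
          then show ?thesis using ab assms(2) by simp
        qed
      qed
      then show False using assms(1) unfolding acyclic_edges_def by auto
    qed
  qed
qed

lemma decomp_add:
  assumes N: "matching_edges N" "\<forall>e\<in>N. e \<noteq> {}" "\<forall>e\<in>N. \<forall>f\<in>F0. e \<inter> f = {}"
  shows "decomp_2reg_matching (F0 \<union> N) \<longleftrightarrow> decomp_2reg_matching F0"
proof
  have NF: "N \<inter> F0 = {}" using N(2,3) by blast
  assume "decomp_2reg_matching (F0 \<union> N)"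
  then obtain A B where AB: "A \<union> B = F0 \<union> N" "A \<inter> B = {}" "two_regular_edges A" "matching_edges B"
    unfolding decomp_2reg_matching_def by blast
  have AN: "A \<inter> N = {}"
  proof (rule ccontr)
    assume "A \<inter> N \<noteq> {}"
    then obtain e where e: "e \<in> A" "e \<in> N" by blast
    then obtain z where z: "z \<in> e" using N(2) by blast
    have "{f\<in>A. z \<in> f} \<subseteq> {e}"
    proof
      fix f assume f: "f \<in> {f\<in>A. z \<in> f}"
      then have "f \<in> F0 \<union> N" using AB(1) by blast
      moreover have "f \<notin> F0" using f z e N(3) by blast
      ultimately have "f \<in> N" by blast
      then show "f \<in> {e}" using N(1) e z f unfolding matching_edges_def by blast
    qed
    then have "card {f\<in>A. z \<in> f} \<le> 1" using card_mono[of "{e}" "{f\<in>A. z \<in> f}"] by simp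
    moreover have "card {f\<in>A. z \<in> f} = 2" using AB(3) e z unfolding two_regular_edges_def by blast
    ultimately show False by simp
  qed
  have "A \<union> (B - N) = F0" using AB(1) AN NF by blast
  moreover have "A \<inter> (B - N) = {}" using AB(2) by blast
  moreover have "matching_edges (B - N)" using AB(4) unfolding matching_edges_def by blast
  ultimately show "decomp_2reg_matching F0" using AB(3) unfolding decomp_2reg_matching_def by blast
next
  have NF: "N \<inter> F0 = {}" using N(2,3) by blast
  assume "decomp_2reg_matching F0"
  then obtain A B where AB: "A \<union> B = F0" "A \<inter> B = {}" "two_regular_edges A" "matching_edges B"
    unfolding decomp_2reg_matching_def by blast
  have "A \<union> (B \<union> N) = F0 \<union> N" using AB(1) by blast
  moreover have "A \<inter> (B \<union> N) = {}" using AB(1,2) NF by blast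
  moreover have "matching_edges (B \<union> N)"
    unfolding matching_edges_def
  proof (intro ballI impI)
    fix e f assume e: "e \<in> B \<union> N" and f: "f \<in> B \<union> N" and ef: "e \<noteq> f"
    show "e \<inter> f = {}"
    proof (cases "e \<in> N")
      case True
      then show ?thesis
        using f ef N(1,3) AB(1) unfolding matching_edges_def by blast
    next
      case False
      then have "e \<in> B" using e by blast
      then show ?thesis using f ef N(3) AB(1,4) unfolding matching_edges_def by blast
    qed
  qed
  ultimately show "decomp_2reg_matching (F0 \<union> N)" using AB(3) unfolding decomp_2reg_matching_def by blast
qed

lemma set_alg2:
  fixes P Q A B C D :: "'b"
  assumes "Q \<noteq> A" "Q \<noteq> B"
  shows "((T - {P}) \<union> {A, B}) - {Q} \<union> {C, D} = (T - {P, Q}) \<union> {A, B, C, D}"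
  using assms by blast

lemma tutte_case:
  fixes V' V :: "'a set" and E' T' E T :: "'a set set"
  assumes G: "simple_graph V' E'" and ST: "spanning_tree V' E' T'"
    and X: "tutte_ext V' E' T' V E T"
  shows "spanning_tree V E T \<and>
         (decomp_2reg_matching (E - T) \<longleftrightarrow> decomp_2reg_matching (E' - T'))"
proof -
  obtain xu yu xv yv u v where
    h: "{xu, yu} \<in> T'" "{xv, yv} \<in> T'" "{xu, yu} \<noteq> {xv, yv}"
       "u \<notin> V'" "v \<notin> V'" "u \<noteq> v"
       "V = V' \<union> {u, v}"
       "T = (T' - {{xu, yu}, {xv, yv}}) \<union> {{xu, u}, {u, yu}, {xv, v}, {v, yv}}"
       "E = (E' - {{xu, yu}, {xv, yv}}) \<union> {{xu, u}, {u, yu}, {xv, v}, {v, yv}} \<union> {{u, v}}"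
    using X unfolding tutte_ext_def by (elim exE conjE) (rule that)
  have TE: "T' \<subseteq> E'" and C: "connected_on V' T'" and A: "acyclic_edges T'"
    using ST unfolding spanning_tree_def by auto
  have EV: "\<And>e. e \<in> E' \<Longrightarrow> e \<subseteq> V'" using G unfolding simple_graph_def by auto
  have TV: "\<And>e. e \<in> T' \<Longrightarrow> e \<subseteq> V'" using TE EV by blast
  have vs: "xu \<in> V'" "yu \<in> V'" "xv \<in> V'" "yv \<in> V'" using TV[OF h(1)] TV[OF h(2)] by auto
  define T1 where "T1 = subdiv T' xu yu u"
  have T1a: "{xv, yv} \<in> T1" using h(2,3) unfolding T1_def subdiv_def by blast
  have nn: "{xv, yv} \<noteq> {xu, u}" "{xv, yv} \<noteq> {u, yu}" using vs h(4) by auto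
  have Teq: "T = subdiv T1 xv yv v"
    unfolding h(8) T1_def subdiv_def using set_alg2[OF nn] by simp
  have conn: "connected_on V T"
  proof -
    have "connected_on (insert u V') T1" unfolding T1_def by (rule conn_subdiv[OF C h(1) vs(1)])
    then have "connected_on (insert v (insert u V')) (subdiv T1 xv yv v)"
      by (rule conn_subdiv[OF _ T1a]) (use vs in simp)
    moreover have "insert v (insert u V') = V" using h(7) by auto
    ultimately show ?thesis using Teq by simp
  qed
  have acyc: "acyclic_edges T"
  proof -
    have f1: "\<forall>e\<in>T'. u \<notin> e" using TV h(4) by blast
    have a1: "acyclic_edges T1" unfolding T1_def by (rule acyclic_subdiv[OF A h(1) f1])
    have f2: "\<forall>e\<in>T1. v \<notin> e"
    proof
      fix e assume "e \<in> T1"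
      then have "e \<in> T' \<or> e = {xu, u} \<or> e = {u, yu}" unfolding T1_def subdiv_def by blast
      then show "v \<notin> e" using TV h(5,6) vs by blast
    qed
    show ?thesis using acyclic_subdiv[OF a1 T1a f2] Teq by simp
  qed
  define R where "R = {{xu, yu}, {xv, yv}}"
  define Nw where "Nw = {{xu, u}, {u, yu}, {xv, v}, {v, yv}}"
  have TT: "T = (T' - R) \<union> Nw" using h(8) unfolding R_def Nw_def by simp
  have EE: "E = (E' - R) \<union> Nw \<union> {{u, v}}" using h(9) unfolding R_def Nw_def by simp
  have RT: "R \<subseteq> T'" using h(1,2) unfolding R_def by simp
  have n1: "\<And>e. e \<in> Nw \<Longrightarrow> e \<notin> E'"
  proof -
    fix e assume "e \<in> Nw"
    then have "u \<in> e \<or> v \<in> e" unfolding Nw_def by auto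
    then show "e \<notin> E'" using EV h(4,5) by blast
  qed
  have uvE: "{u, v} \<notin> E'" using EV h(4) by blast
  have uvN: "{u, v} \<notin> Nw"
    unfolding Nw_def using vs h(4,5,6) by (auto simp: doubleton_eq_iff)
  have ET: "E - T = (E' - T') \<union> {{u, v}}"
    unfolding EE TT using uvE uvN n1 RT TE by blast
  have sub: "T \<subseteq> E" unfolding TT EE using TE by blast
  have D: "decomp_2reg_matching ((E' - T') \<union> {{u, v}}) \<longleftrightarrow> decomp_2reg_matching (E' - T')"
    by (rule decomp_add) (use EV h(4,5) in \<open>auto simp: matching_edges_def\<close>)
  show ?thesis using conn acyc sub ET D unfolding spanning_tree_def by simp
qed

lemma set_alg4:
  fixes P A B1 C B2 D B3 F B4 :: "'b"
  assumes "B1 \<notin> T" "B2 \<notin> T" "B3 \<notin> T" "B1 \<noteq> A" "B2 \<noteq> A" "B2 \<noteq> C"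
    "B3 \<noteq> A" "B3 \<noteq> C" "B3 \<noteq> D"
  shows "((((T - {P}) \<union> {A, B1}) - {B1} \<union> {C, B2}) - {B2} \<union> {D, B3}) - {B3} \<union> {F, B4}
         = (T - {P}) \<union> {A, C, D, F, B4}"
  using assms by blast

lemma fresh_subdiv:
  assumes "\<forall>e\<in>F. w \<notin> e" "w \<noteq> a" "w \<noteq> b" "w \<noteq> w'"
  shows "\<forall>e\<in>subdiv F a b w'. w \<notin> e"
  using assms unfolding subdiv_def by auto

lemma subdiv_in: "{w, b} \<in> subdiv F a b w"
  unfolding subdiv_def by simp

lemma diamond_case:
  fixes V' V :: "'a set" and E' T' E T :: "'a set set"
  assumes G: "simple_graph V' E'" and ST: "spanning_tree V' E' T'"
    and X: "diamond_ext V' E' T' V E T"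
  shows "spanning_tree V E T \<and>
         (decomp_2reg_matching (E - T) \<longleftrightarrow> decomp_2reg_matching (E' - T'))"
proof -
  obtain x y d1 d2 d3 d4 where
    h: "{x, y} \<in> T'"
       "d1 \<notin> V'" "d2 \<notin> V'" "d3 \<notin> V'" "d4 \<notin> V'" "distinct [d1, d2, d3, d4]"
       "V = V' \<union> {d1, d2, d3, d4}"
       "T = (T' - {{x, y}}) \<union> {{x, d1}, {d1, d3}, {d3, d2}, {d2, d4}, {d4, y}}"
       "E = (E' - {{x, y}}) \<union> {{x, d1}, {d1, d3}, {d3, d2}, {d2, d4}, {d4, y}} \<union> {{d1, d2}, {d3, d4}}"
    using X unfolding diamond_ext_def by (elim exE conjE) (rule that)
  have TE: "T' \<subseteq> E'" and C: "connected_on V' T'" and A: "acyclic_edges T'"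
    using ST unfolding spanning_tree_def by auto
  have EV: "\<And>e. e \<in> E' \<Longrightarrow> e \<subseteq> V'" using G unfolding simple_graph_def by auto
  have TV: "\<And>e. e \<in> T' \<Longrightarrow> e \<subseteq> V'" using TE EV by blast
  have vs: "x \<in> V'" "y \<in> V'" using TV[OF h(1)] by auto
  have xy: "x \<noteq> y"
  proof
    assume "x = y"
    then have "card {x, y} = 1" by simp
    moreover have "card {x, y} = 2" using G h(1) TE unfolding simple_graph_def by blast
    ultimately show False by simp
  qed
  have dd: "d1 \<noteq> d2" "d1 \<noteq> d3" "d1 \<noteq> d4" "d2 \<noteq> d3" "d2 \<noteq> d4" "d3 \<noteq> d4"
    using h(6) by auto
  have dx: "d1 \<noteq> x" "d2 \<noteq> x" "d3 \<noteq> x" "d4 \<noteq> x" "d1 \<noteq> y" "d2 \<noteq> y" "d3 \<noteq> y" "d4 \<noteq> y"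
    using vs h(2-5) by auto
  define T1 where "T1 = subdiv T' x y d1"
  define T2 where "T2 = subdiv T1 d1 y d3"
  define T3 where "T3 = subdiv T2 d3 y d2"
  define T4 where "T4 = subdiv T3 d2 y d4"
  have m1: "{d1, y} \<in> T1" "{d3, y} \<in> T2" "{d2, y} \<in> T3"
    unfolding T1_def T2_def T3_def by (rule subdiv_in)+
  have nT: "{d1, y} \<notin> T'" "{d3, y} \<notin> T'" "{d2, y} \<notin> T'"
    using TV h(2-4) by blast+
  have Teq: "T = T4"
  proof -
    have "T4 = (T' - {{x, y}}) \<union> {{x, d1}, {d1, d3}, {d3, d2}, {d2, d4}, {d4, y}}"
      unfolding T4_def T3_def T2_def T1_def subdiv_def
      by (rule set_alg4) (use nT dd dx xy in \<open>auto simp: doubleton_eq_iff\<close>)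
    then show ?thesis using h(8) by simp
  qed
  have conn: "connected_on V T"
  proof -
    have c1: "connected_on (insert d1 V') T1" unfolding T1_def by (rule conn_subdiv[OF C h(1) vs(1)])
    have c2: "connected_on (insert d3 (insert d1 V')) T2" unfolding T2_def
      by (rule conn_subdiv[OF c1 m1(1)]) simp
    have c3: "connected_on (insert d2 (insert d3 (insert d1 V'))) T3" unfolding T3_def
      by (rule conn_subdiv[OF c2 m1(2)]) simp
    have c4: "connected_on (insert d4 (insert d2 (insert d3 (insert d1 V')))) T4" unfolding T4_def
      by (rule conn_subdiv[OF c3 m1(3)]) simp
    moreover have "insert d4 (insert d2 (insert d3 (insert d1 V'))) = V" using h(7) by auto
    ultimately show ?thesis using Teq by simp
  qed
  have acyc: "acyclic_edges T"
  proof -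
    have f1: "\<forall>e\<in>T'. d1 \<notin> e" using TV h(2) by blast
    have a1: "acyclic_edges T1" unfolding T1_def by (rule acyclic_subdiv[OF A h(1) f1])
    have f2: "\<forall>e\<in>T1. d3 \<notin> e" unfolding T1_def
      by (rule fresh_subdiv) (use TV h(4) dd dx in auto)
    have a2: "acyclic_edges T2" unfolding T2_def by (rule acyclic_subdiv[OF a1 m1(1) f2])
    have f3': "\<forall>e\<in>T1. d2 \<notin> e" unfolding T1_def
      by (rule fresh_subdiv) (use TV h(3) dd dx in auto)
    have f3: "\<forall>e\<in>T2. d2 \<notin> e" unfolding T2_def
      by (rule fresh_subdiv) (use f3' dd dx in auto)
    have a3: "acyclic_edges T3" unfolding T3_def by (rule acyclic_subdiv[OF a2 m1(2) f3])
    have f4': "\<forall>e\<in>T1. d4 \<notin> e" unfolding T1_def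
      by (rule fresh_subdiv) (use TV h(5) dd dx in auto)
    have f4'': "\<forall>e\<in>T2. d4 \<notin> e" unfolding T2_def
      by (rule fresh_subdiv) (use f4' dd dx in auto)
    have f4: "\<forall>e\<in>T3. d4 \<notin> e" unfolding T3_def
      by (rule fresh_subdiv) (use f4'' dd dx in auto)
    have a4: "acyclic_edges T4" unfolding T4_def by (rule acyclic_subdiv[OF a3 m1(3) f4])
    show ?thesis using a4 Teq by simp
  qed
  define R where "R = {{x, y}}"
  define Nw where "Nw = {{x, d1}, {d1, d3}, {d3, d2}, {d2, d4}, {d4, y}}"
  define M where "M = {{d1, d2}, {d3, d4}}"
  have TT: "T = (T' - R) \<union> Nw" using h(8) unfolding R_def Nw_def by simp
  have EE: "E = (E' - R) \<union> Nw \<union> M" using h(9) unfolding R_def Nw_def M_def by simp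
  have RT: "R \<subseteq> T'" using h(1) unfolding R_def by simp
  have n1: "\<And>e. e \<in> Nw \<Longrightarrow> e \<notin> E'"
  proof -
    fix e assume "e \<in> Nw"
    then have "d1 \<in> e \<or> d2 \<in> e \<or> d3 \<in> e \<or> d4 \<in> e" unfolding Nw_def by auto
    then show "e \<notin> E'" using EV h(2-5) by blast
  qed
  have ME: "\<And>e. e \<in> M \<Longrightarrow> e \<notin> E'"
  proof -
    fix e assume "e \<in> M"
    then have "d1 \<in> e \<or> d3 \<in> e" unfolding M_def by auto
    then show "e \<notin> E'" using EV h(2,4) by blast
  qed
  have MN1: "{d1, d2} \<notin> Nw" "{d3, d4} \<notin> Nw"
    unfolding Nw_def using dd dx by (simp_all add: doubleton_eq_iff)
  have MN: "\<And>e. e \<in> M \<Longrightarrow> e \<notin> Nw"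
    unfolding M_def using MN1 by blast
  have ET: "E - T = (E' - T') \<union> M"
    unfolding EE TT using ME MN n1 RT TE by blast
  have sub: "T \<subseteq> E" unfolding TT EE using TE by blast
  have D: "decomp_2reg_matching ((E' - T') \<union> M) \<longleftrightarrow> decomp_2reg_matching (E' - T')"
  proof (rule decomp_add)
    show "matching_edges M" unfolding M_def matching_edges_def using dd by auto
    show "\<forall>e\<in>M. e \<noteq> {}" unfolding M_def by auto
    show "\<forall>e\<in>M. \<forall>f\<in>E' - T'. e \<inter> f = {}"
      unfolding M_def using EV h(2-5) by blast
  qed
  show ?thesis using conn acyc sub ET D unfolding spanning_tree_def by simp
qed

theorem lemma10:
  fixes V' V :: "'a set" and E' T' E T :: "'a set set"
  assumes "simple_graph V' E'"
    and "spanning_tree V' E' T'"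
    and "tutte_ext V' E' T' V E T \<or> diamond_ext V' E' T' V E T"
  shows "spanning_tree V E T \<and>
         (decomp_2reg_matching (E - T) \<longleftrightarrow> decomp_2reg_matching (E' - T'))"
  using assms tutte_case diamond_case by blast

end
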